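(* In $\mathbf{L}^{\Box}_{\mathrm{pol}}$, if $c \vartriangleright c'$ and $c : (\Gamma ¦ \Theta \vdash \Delta)$, then $c' : (\Gamma ¦ \Theta \vdash \Delta)$.
   Context: $\mathbf{L}^{\Box}_{\mathrm{pol}}$ is a polarised sequent calculus for classical S4 with polarities $+,-,\square$ ($\boxplus\in\{+,\square\}$) and types $\mathbb{1}, A\otimes B, A\oplus B, \Box A, \neg A, A\&B, A⅋B$ ($⅋$ = "par", negative disjunction). Commands $c ::= \langle t\|S\rangle^{\boxplus} \mid \langle V\|e\rangle^-$; $c:(\Gamma¦\Theta\vdash\Delta)$ means $c$ is well-typed with ordinary variables $\Gamma$, modal variables $\Theta$, covariables $\Delta$. The relation $\vartriangleright$ is the deterministic top-level operational semantics: $\langle \mu\alpha^\epsilon.c \| S\rangle^\epsilon \vartriangleright c[S/\alpha]$; $\langle V\|\tilde\mu x^\epsilon.c\rangle^\epsilon \vartriangleright c[V/x]$; $\langle ()\|\tilde\mu().c\rangle^\square\vartriangleright c$; $\langle (V,W)\|\tilde\mu(x,y).c\rangle^\epsilon\vartriangleright c[V/x,W/y]$; $\langle \iota_i V\|\tilde\mu[\iota_1x_1.c_1\mid\iota_2x_2.c_2]\rangle^\epsilon\vartriangleright c_i[V/x_i]$; $\langle\square V\|\tilde\mu\square x.c\rangle^\square\vartriangleright c[V/x]$; $\langle\mu[x].c\|[V]\rangle^-\vartriangleright c[V/x]$; $\langle\mu(\alpha,\beta).c\|(S,S')\rangle^-\vartriangleright c[S/\alpha,S'/\beta]$; $\langle\mu(\alpha_1.c_1,\alpha_2.c_2)\|\pi_iS\rangle^-\vartriangleright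 c_i[S/\alpha_i]$. *)

theory Defs
  imports Main
begin

(* Binding is represented with de Bruijn indices, with three separate
   namespaces: ordinary variables (context Gamma), modal variables
   (context Theta) and covariables (context Delta). *)

datatype pol = PPos | PNeg | PBox

datatype ty =
    One
  | Tensor ty ty
  | Oplus ty ty
  | Bx ty
  | Not ty
  | With ty ty
  | Par ty ty

fun polty :: "ty \<Rightarrow> pol" where
  "polty One = PBox"
| "polty (Tensor A B) = (if polty A = PBox \<and> polty B = PBox then PBox else PPos)"
| "polty (Oplus A B) = (if polty A = PBox \<and> polty B = PBox then PBox else PPos)"
| "polty (Bx A) = PBox"
| "polty (Not A) = PNeg"
| "polty (With A B) = PNeg"
| "polty (Par A B) = PNeg"

datatype tm =
    Var nat
  | MVar nat
  | Mu pol cmd          (* \<mu>\<alpha>^\<epsilon>.c   binds a covariable *)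
  | Unit
  | Pair tm tm
  | Inj1 tm
  | Inj2 tm
  | BoxV tm
  | MuBrk cmd           (* \<mu>[x].c        binds an ordinary variable *)
  | MuPar cmd           (* \<mu>(\<alpha>,\<beta>).c     binds two covariables (\<alpha> = index 0) *)
  | MuWith cmd cmd
and cotm =
    CoVar nat
  | MuT pol cmd         (* \<mu>~x^\<epsilon>.c  binds an ordinary variable *)
  | MuTPair cmd         (* \<mu>~(x,y).c  binds two ordinary variables (x = index 0) *)
  | MuTCase cmd cmd
  | MuTUnit cmd
  | MuTBox cmd          (* \<mu>~Box x.c  binds a modal variable *)
  | Brk tm
  | CoPair cotm cotm
  | Proj1 cotm
  | Proj2 cotm
and cmd =
    Cut pol tm cotm

fun is_value :: "tm \<Rightarrow> bool" where
  "is_value (Var i) = True"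
| "is_value (MVar i) = True"
| "is_value (Mu e c) = (e = PNeg)"
| "is_value Unit = True"
| "is_value (Pair V W) = (is_value V \<and> is_value W)"
| "is_value (Inj1 V) = is_value V"
| "is_value (Inj2 V) = is_value V"
| "is_value (BoxV V) = is_value V"
| "is_value (MuBrk c) = True"
| "is_value (MuPar c) = True"
| "is_value (MuWith c1 c2) = True"

fun is_stack :: "cotm \<Rightarrow> bool" where
  "is_stack (CoVar i) = True"
| "is_stack (MuT e c) = (e \<noteq> PNeg)"
| "is_stack (MuTPair c) = True"
| "is_stack (MuTCase c1 c2) = True"
| "is_stack (MuTUnit c) = True"
| "is_stack (MuTBox c) = True"
| "is_stack (Brk V) = is_value V"
| "is_stack (CoPair S S') = (is_stack S \<and> is_stack S')"
| "is_stack (Proj1 S) = is_stack S"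
| "is_stack (Proj2 S) = is_stack S"

definition lift :: "(nat \<Rightarrow> nat) \<Rightarrow> nat \<Rightarrow> nat" where
  "lift r = (\<lambda>n. case n of 0 \<Rightarrow> 0 | Suc m \<Rightarrow> Suc (r m))"

primrec ren_tm :: "(nat \<Rightarrow> nat) \<Rightarrow> (nat \<Rightarrow> nat) \<Rightarrow> (nat \<Rightarrow> nat) \<Rightarrow> tm \<Rightarrow> tm"
and ren_co :: "(nat \<Rightarrow> nat) \<Rightarrow> (nat \<Rightarrow> nat) \<Rightarrow> (nat \<Rightarrow> nat) \<Rightarrow> cotm \<Rightarrow> cotm"
and ren_cmd :: "(nat \<Rightarrow> nat) \<Rightarrow> (nat \<Rightarrow> nat) \<Rightarrow> (nat \<Rightarrow> nat) \<Rightarrow> cmd \<Rightarrow> cmd" where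
  "ren_tm r m d (Var i) = Var (r i)"
| "ren_tm r m d (MVar i) = MVar (m i)"
| "ren_tm r m d (Mu e c) = Mu e (ren_cmd r m (lift d) c)"
| "ren_tm r m d Unit = Unit"
| "ren_tm r m d (Pair V W) = Pair (ren_tm r m d V) (ren_tm r m d W)"
| "ren_tm r m d (Inj1 V) = Inj1 (ren_tm r m d V)"
| "ren_tm r m d (Inj2 V) = Inj2 (ren_tm r m d V)"
| "ren_tm r m d (BoxV V) = BoxV (ren_tm r m d V)"
| "ren_tm r m d (MuBrk c) = MuBrk (ren_cmd (lift r) m d c)"
| "ren_tm r m d (MuPar c) = MuPar (ren_cmd r m (lift (lift d)) c)"
| "ren_tm r m d (MuWith c1 c2) = MuWith (ren_cmd r m (lift d) c1) (ren_cmd r m (lift d) c2)"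
| "ren_co r m d (CoVar i) = CoVar (d i)"
| "ren_co r m d (MuT e c) = MuT e (ren_cmd (lift r) m d c)"
| "ren_co r m d (MuTPair c) = MuTPair (ren_cmd (lift (lift r)) m d c)"
| "ren_co r m d (MuTCase c1 c2) = MuTCase (ren_cmd (lift r) m d c1) (ren_cmd (lift r) m d c2)"
| "ren_co r m d (MuTUnit c) = MuTUnit (ren_cmd r m d c)"
| "ren_co r m d (MuTBox c) = MuTBox (ren_cmd r (lift m) d c)"
| "ren_co r m d (Brk V) = Brk (ren_tm r m d V)"
| "ren_co r m d (CoPair S S') = CoPair (ren_co r m d S) (ren_co r m d S')"
| "ren_co r m d (Proj1 S) = Proj1 (ren_co r m d S)"
| "ren_co r m d (Proj2 S) = Proj2 (ren_co r m d S)"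
| "ren_cmd r m d (Cut e t k) = Cut e (ren_tm r m d t) (ren_co r m d k)"

definition scons :: "'a \<Rightarrow> (nat \<Rightarrow> 'a) \<Rightarrow> nat \<Rightarrow> 'a" where
  "scons x f = (\<lambda>n. case n of 0 \<Rightarrow> x | Suc m \<Rightarrow> f m)"

definition upG_s :: "(nat \<Rightarrow> tm) \<Rightarrow> nat \<Rightarrow> tm" where
  "upG_s s = scons (Var 0) (\<lambda>i. ren_tm Suc id id (s i))"
definition upG_t :: "(nat \<Rightarrow> tm) \<Rightarrow> nat \<Rightarrow> tm" where
  "upG_t th = (\<lambda>i. ren_tm Suc id id (th i))"
definition upG_d :: "(nat \<Rightarrow> cotm) \<Rightarrow> nat \<Rightarrow> cotm" where
  "upG_d d = (\<lambda>i. ren_co Suc id id (d i))"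

definition upM_s :: "(nat \<Rightarrow> tm) \<Rightarrow> nat \<Rightarrow> tm" where
  "upM_s s = (\<lambda>i. ren_tm id Suc id (s i))"
definition upM_t :: "(nat \<Rightarrow> tm) \<Rightarrow> nat \<Rightarrow> tm" where
  "upM_t th = scons (MVar 0) (\<lambda>i. ren_tm id Suc id (th i))"
definition upM_d :: "(nat \<Rightarrow> cotm) \<Rightarrow> nat \<Rightarrow> cotm" where
  "upM_d d = (\<lambda>i. ren_co id Suc id (d i))"

definition upD_s :: "(nat \<Rightarrow> tm) \<Rightarrow> nat \<Rightarrow> tm" where
  "upD_s s = (\<lambda>i. ren_tm id id Suc (s i))"
definition upD_t :: "(nat \<Rightarrow> tm) \<Rightarrow> nat \<Rightarrow> tm" where
  "upD_t th = (\<lambda>i. ren_tm id id Suc (th i))"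
definition upD_d :: "(nat \<Rightarrow> cotm) \<Rightarrow> nat \<Rightarrow> cotm" where
  "upD_d d = scons (CoVar 0) (\<lambda>i. ren_co id id Suc (d i))"

primrec sub_tm :: "(nat \<Rightarrow> tm) \<Rightarrow> (nat \<Rightarrow> tm) \<Rightarrow> (nat \<Rightarrow> cotm) \<Rightarrow> tm \<Rightarrow> tm"
and sub_co :: "(nat \<Rightarrow> tm) \<Rightarrow> (nat \<Rightarrow> tm) \<Rightarrow> (nat \<Rightarrow> cotm) \<Rightarrow> cotm \<Rightarrow> cotm"
and sub_cmd :: "(nat \<Rightarrow> tm) \<Rightarrow> (nat \<Rightarrow> tm) \<Rightarrow> (nat \<Rightarrow> cotm) \<Rightarrow> cmd \<Rightarrow> cmd" where
  "sub_tm s th d (Var i) = s i"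
| "sub_tm s th d (MVar i) = th i"
| "sub_tm s th d (Mu e c) = Mu e (sub_cmd (upD_s s) (upD_t th) (upD_d d) c)"
| "sub_tm s th d Unit = Unit"
| "sub_tm s th d (Pair V W) = Pair (sub_tm s th d V) (sub_tm s th d W)"
| "sub_tm s th d (Inj1 V) = Inj1 (sub_tm s th d V)"
| "sub_tm s th d (Inj2 V) = Inj2 (sub_tm s th d V)"
| "sub_tm s th d (BoxV V) = BoxV (sub_tm s th d V)"
| "sub_tm s th d (MuBrk c) = MuBrk (sub_cmd (upG_s s) (upG_t th) (upG_d d) c)"
| "sub_tm s th d (MuPar c) =
     MuPar (sub_cmd (upD_s (upD_s s)) (upD_t (upD_t th)) (upD_d (upD_d d)) c)"
| "sub_tm s th d (MuWith c1 c2) =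
     MuWith (sub_cmd (upD_s s) (upD_t th) (upD_d d) c1) (sub_cmd (upD_s s) (upD_t th) (upD_d d) c2)"
| "sub_co s th d (CoVar i) = d i"
| "sub_co s th d (MuT e c) = MuT e (sub_cmd (upG_s s) (upG_t th) (upG_d d) c)"
| "sub_co s th d (MuTPair c) =
     MuTPair (sub_cmd (upG_s (upG_s s)) (upG_t (upG_t th)) (upG_d (upG_d d)) c)"
| "sub_co s th d (MuTCase c1 c2) =
     MuTCase (sub_cmd (upG_s s) (upG_t th) (upG_d d) c1) (sub_cmd (upG_s s) (upG_t th) (upG_d d) c2)"
| "sub_co s th d (MuTUnit c) = MuTUnit (sub_cmd s th d c)"
| "sub_co s th d (MuTBox c) = MuTBox (sub_cmd (upM_s s) (upM_t th) (upM_d d) c)"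
| "sub_co s th d (Brk V) = Brk (sub_tm s th d V)"
| "sub_co s th d (CoPair S S') = CoPair (sub_co s th d S) (sub_co s th d S')"
| "sub_co s th d (Proj1 S) = Proj1 (sub_co s th d S)"
| "sub_co s th d (Proj2 S) = Proj2 (sub_co s th d S)"
| "sub_cmd s th d (Cut e t k) = Cut e (sub_tm s th d t) (sub_co s th d k)"

(* the substitutions used by the operational semantics; the bound
   variable is always index 0 (and index 1 for the second of a pair) *)
definition substD :: "cmd \<Rightarrow> cotm \<Rightarrow> cmd" where
  "substD c S = sub_cmd Var MVar (scons S CoVar) c"
definition substD2 :: "cmd \<Rightarrow> cotm \<Rightarrow> cotm \<Rightarrow> cmd" where
  "substD2 c S S' = sub_cmd Var MVar (scons S (scons S' CoVar)) c"
definition substG :: "cmd \<Rightarrow> tm \<Rightarrow> cmd" where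
  "substG c V = sub_cmd (scons V Var) MVar CoVar c"
definition substG2 :: "cmd \<Rightarrow> tm \<Rightarrow> tm \<Rightarrow> cmd" where
  "substG2 c V W = sub_cmd (scons V (scons W Var)) MVar CoVar c"
definition substM :: "cmd \<Rightarrow> tm \<Rightarrow> cmd" where
  "substM c V = sub_cmd Var (scons V MVar) CoVar c"

(* typing:  tm_typ G T D t A  is  G | T |- t : A | D ;
            co_typ G T D e A  is  G | T | e : A |- D ;
            cmd_typ G T D c   is  c : (G | T |- D) *)
inductive tm_typ :: "ty list \<Rightarrow> ty list \<Rightarrow> ty list \<Rightarrow> tm \<Rightarrow> ty \<Rightarrow> bool"
and co_typ :: "ty list \<Rightarrow> ty list \<Rightarrow> ty list \<Rightarrow> cotm \<Rightarrow> ty \<Rightarrow> bool"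
and cmd_typ :: "ty list \<Rightarrow> ty list \<Rightarrow> ty list \<Rightarrow> cmd \<Rightarrow> bool" where
  T_Var: "i < length G \<Longrightarrow> tm_typ G T D (Var i) (G ! i)"
| T_MVar: "i < length T \<Longrightarrow> tm_typ G T D (MVar i) (T ! i)"
| T_Mu: "polty A = e \<Longrightarrow> cmd_typ G T (A # D) c \<Longrightarrow> tm_typ G T D (Mu e c) A"
| T_Unit: "tm_typ G T D Unit One"
| T_Pair: "is_value V \<Longrightarrow> is_value W \<Longrightarrow> tm_typ G T D V A \<Longrightarrow> tm_typ G T D W B
     \<Longrightarrow> tm_typ G T D (Pair V W) (Tensor A B)"
| T_Inj1: "is_value V \<Longrightarrow> tm_typ G T D V A \<Longrightarrow> tm_typ G T D (Inj1 V) (Oplus A B)"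
| T_Inj2: "is_value V \<Longrightarrow> tm_typ G T D V B \<Longrightarrow> tm_typ G T D (Inj2 V) (Oplus A B)"
| T_Box: "is_value V \<Longrightarrow> tm_typ [] T [] V A \<Longrightarrow> tm_typ G T D (BoxV V) (Bx A)"
| T_MuBrk: "cmd_typ (A # G) T D c \<Longrightarrow> tm_typ G T D (MuBrk c) (Not A)"
| T_MuPar: "cmd_typ G T (A # B # D) c \<Longrightarrow> tm_typ G T D (MuPar c) (Par A B)"
| T_MuWith: "cmd_typ G T (A # D) c1 \<Longrightarrow> cmd_typ G T (B # D) c2
     \<Longrightarrow> tm_typ G T D (MuWith c1 c2) (With A B)"
| C_CoVar: "i < length D \<Longrightarrow> co_typ G T D (CoVar i) (D ! i)"
| C_MuT: "polty A = e \<Longrightarrow> cmd_typ (A # G) T D c \<Longrightarrow> co_typ G T D (MuT e c) A"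
| C_MuTPair: "cmd_typ (A # B # G) T D c \<Longrightarrow> co_typ G T D (MuTPair c) (Tensor A B)"
| C_MuTCase: "cmd_typ (A # G) T D c1 \<Longrightarrow> cmd_typ (B # G) T D c2
     \<Longrightarrow> co_typ G T D (MuTCase c1 c2) (Oplus A B)"
| C_MuTUnit: "cmd_typ G T D c \<Longrightarrow> co_typ G T D (MuTUnit c) One"
| C_MuTBox: "cmd_typ G (A # T) D c \<Longrightarrow> co_typ G T D (MuTBox c) (Bx A)"
| C_Brk: "is_value V \<Longrightarrow> tm_typ G T D V A \<Longrightarrow> co_typ G T D (Brk V) (Not A)"
| C_CoPair: "is_stack S \<Longrightarrow> is_stack S' \<Longrightarrow> co_typ G T D S A \<Longrightarrow> co_typ G T D S' B
     \<Longrightarrow> co_typ G T D (CoPair S S') (Par A B)"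
| C_Proj1: "is_stack S \<Longrightarrow> co_typ G T D S A \<Longrightarrow> co_typ G T D (Proj1 S) (With A B)"
| C_Proj2: "is_stack S \<Longrightarrow> co_typ G T D S B \<Longrightarrow> co_typ G T D (Proj2 S) (With A B)"
| Cut_Pos: "e \<noteq> PNeg \<Longrightarrow> polty A = e \<Longrightarrow> is_stack S \<Longrightarrow> tm_typ G T D t A \<Longrightarrow> co_typ G T D S A
     \<Longrightarrow> cmd_typ G T D (Cut e t S)"
| Cut_Neg: "polty A = PNeg \<Longrightarrow> is_value V \<Longrightarrow> tm_typ G T D V A \<Longrightarrow> co_typ G T D k A
     \<Longrightarrow> cmd_typ G T D (Cut PNeg V k)"

inductive red :: "cmd \<Rightarrow> cmd \<Rightarrow> bool" where
  R_Mu: "is_stack S \<Longrightarrow> red (Cut e (Mu e c) S) (substD c S)"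
| R_MuT: "is_value V \<Longrightarrow> red (Cut e V (MuT e c)) (substG c V)"
| R_Unit: "red (Cut PBox Unit (MuTUnit c)) c"
| R_Pair: "is_value V \<Longrightarrow> is_value W \<Longrightarrow> red (Cut e (Pair V W) (MuTPair c)) (substG2 c V W)"
| R_Inj1: "is_value V \<Longrightarrow> red (Cut e (Inj1 V) (MuTCase c1 c2)) (substG c1 V)"
| R_Inj2: "is_value V \<Longrightarrow> red (Cut e (Inj2 V) (MuTCase c1 c2)) (substG c2 V)"
| R_Box: "is_value V \<Longrightarrow> red (Cut PBox (BoxV V) (MuTBox c)) (substM c V)"
| R_Brk: "is_value V \<Longrightarrow> red (Cut PNeg (MuBrk c) (Brk V)) (substG c V)"
| R_Par: "is_stack S \<Longrightarrow> is_stack S' \<Longrightarrow> red (Cut PNeg (MuPar c) (CoPair S S')) (substD2 c S S')"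
| R_Proj1: "is_stack S \<Longrightarrow> red (Cut PNeg (MuWith c1 c2) (Proj1 S)) (substD c1 S)"
| R_Proj2: "is_stack S \<Longrightarrow> red (Cut PNeg (MuWith c1 c2) (Proj2 S)) (substD c2 S)"

end

theory Submission
  imports Defs
begin

lemma ren_val:
  "is_value (ren_tm r m d t) = is_value t"
  "is_stack (ren_co r m d k) = is_stack k"
  "ren_cmd r m d c = ren_cmd r m d c"
  by (induction t and k and c arbitrary: r m d and r m d and r m d
     ) auto

lemma sub_val:
  assumes "\<forall>i. is_value (s i)" "\<forall>i. is_value (th i)" "\<forall>i. is_stack (d i)"
  shows "is_value t \<Longrightarrow> is_value (sub_tm s th d t)"
    "is_stack k \<Longrightarrow> is_stack (sub_co s th d k)"
    "sub_cmd s th d c = sub_cmd s th d c"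
  using assms
  by (induction t and k and c arbitrary: s th d and s th d and s th d
     ) simp_all

lemma ren_valI: "is_value t \<Longrightarrow> is_value (ren_tm r m d t)" "is_stack k \<Longrightarrow> is_stack (ren_co r m d k)"
  by (simp_all add: ren_val)

definition rok :: "ty list \<Rightarrow> ty list \<Rightarrow> ty list \<Rightarrow> (nat \<Rightarrow> nat) \<Rightarrow> (nat \<Rightarrow> nat) \<Rightarrow> (nat \<Rightarrow> nat)
   \<Rightarrow> ty list \<Rightarrow> ty list \<Rightarrow> ty list \<Rightarrow> bool" where
  "rok G T D r m d G' T' D' \<longleftrightarrow>
    (\<forall>i<length G. r i < length G' \<and> G'!(r i) = G!i) \<and>
    (\<forall>i<length T. m i < length T' \<and> T'!(m i) = T!i) \<and>
    (\<forall>i<length D. d i < length D' \<and> D'!(d i) = D!i)"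

lemma rok_G: "rok G T D r m d G' T' D' \<Longrightarrow> rok (A#G) T D (lift r) m d (A#G') T' D'"
  by (auto simp: rok_def lift_def nth_Cons split: nat.splits)
lemma rok_GG: "rok G T D r m d G' T' D' \<Longrightarrow> rok (A#B#G) T D (lift (lift r)) m d (A#B#G') T' D'"
  by (auto simp: rok_def lift_def nth_Cons split: nat.splits)
lemma rok_T: "rok G T D r m d G' T' D' \<Longrightarrow> rok G (A#T) D r (lift m) d G' (A#T') D'"
  by (auto simp: rok_def lift_def nth_Cons split: nat.splits)
lemma rok_D: "rok G T D r m d G' T' D' \<Longrightarrow> rok G T (A#D) r m (lift d) G' T' (A#D')"
  by (auto simp: rok_def lift_def nth_Cons split: nat.splits)
lemma rok_DD: "rok G T D r m d G' T' D' \<Longrightarrow> rok G T (A#B#D) r m (lift (lift d)) G' T' (A#B#D')"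
  by (auto simp: rok_def lift_def nth_Cons split: nat.splits)
lemma rok_box: "rok G T D r m d G' T' D' \<Longrightarrow> rok [] T [] r m d [] T' []"
  by (auto simp: rok_def)

lemma ren_typ:
  "tm_typ G T D t A \<Longrightarrow> (\<forall>G' T' D' r m d. rok G T D r m d G' T' D' \<longrightarrow> tm_typ G' T' D' (ren_tm r m d t) A)"
  "co_typ G T D k A \<Longrightarrow> (\<forall>G' T' D' r m d. rok G T D r m d G' T' D' \<longrightarrow> co_typ G' T' D' (ren_co r m d k) A)"
  "cmd_typ G T D c \<Longrightarrow> (\<forall>G' T' D' r m d. rok G T D r m d G' T' D' \<longrightarrow> cmd_typ G' T' D' (ren_cmd r m d c))"
proof (induction rule: tm_typ_co_typ_cmd_typ.inducts)
  case (T_Var i G T D)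
  then show ?case by (metis rok_def tm_typ_co_typ_cmd_typ.T_Var ren_tm.simps(1))
next
  case (T_MVar i T G D)
  then show ?case by (metis rok_def tm_typ_co_typ_cmd_typ.T_MVar ren_tm.simps(2))
next
  case (C_CoVar i D G T)
  then show ?case by (metis rok_def tm_typ_co_typ_cmd_typ.C_CoVar ren_co.simps(1))
next
  case (T_Unit G T D)
  show ?case
    apply (insert T_Unit)
    apply (intro allI impI, simp only: ren_tm.simps ren_co.simps ren_cmd.simps)
    apply (rule tm_typ_co_typ_cmd_typ.T_Unit)
    by ((assumption | blast | simp add: ren_val)+)?
next
  case (T_Pair V W G T D A B)
  show ?case
    apply (insert T_Pair)
    apply (intro allI impI, simp only: ren_tm.simps ren_co.simps ren_cmd.simps)
    apply (rule tm_typ_co_typ_cmd_typ.T_Pair)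
    by ((assumption | blast | simp add: ren_val)+)?
next
  case (T_Inj1 V G T D A B)
  show ?case
    apply (insert T_Inj1)
    apply (intro allI impI, simp only: ren_tm.simps ren_co.simps ren_cmd.simps)
    apply (rule tm_typ_co_typ_cmd_typ.T_Inj1)
    by ((assumption | blast | simp add: ren_val)+)?
next
  case (T_Inj2 V G T D B A)
  show ?case
    apply (insert T_Inj2)
    apply (intro allI impI, simp only: ren_tm.simps ren_co.simps ren_cmd.simps)
    apply (rule tm_typ_co_typ_cmd_typ.T_Inj2)
    by ((assumption | blast | simp add: ren_val)+)?
next
  case (C_MuTUnit G T D c)
  show ?case
    apply (insert C_MuTUnit)
    apply (intro allI impI, simp only: ren_tm.simps ren_co.simps ren_cmd.simps)
    apply (rule tm_typ_co_typ_cmd_typ.C_MuTUnit)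
    by ((assumption | blast | simp add: ren_val)+)?
next
  case (C_Brk V G T D A)
  show ?case
    apply (insert C_Brk)
    apply (intro allI impI, simp only: ren_tm.simps ren_co.simps ren_cmd.simps)
    apply (rule tm_typ_co_typ_cmd_typ.C_Brk)
    by ((assumption | blast | simp add: ren_val)+)?
next
  case (C_CoPair S S' G T D A B)
  show ?case
    apply (insert C_CoPair)
    apply (intro allI impI, simp only: ren_tm.simps ren_co.simps ren_cmd.simps)
    apply (rule tm_typ_co_typ_cmd_typ.C_CoPair)
    by ((assumption | blast | simp add: ren_val)+)?
next
  case (C_Proj1 S G T D A B)
  show ?case
    apply (insert C_Proj1)
    apply (intro allI impI, simp only: ren_tm.simps ren_co.simps ren_cmd.simps)
    apply (rule tm_typ_co_typ_cmd_typ.C_Proj1)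
    by ((assumption | blast | simp add: ren_val)+)?
next
  case (C_Proj2 S G T D B A)
  show ?case
    apply (insert C_Proj2)
    apply (intro allI impI, simp only: ren_tm.simps ren_co.simps ren_cmd.simps)
    apply (rule tm_typ_co_typ_cmd_typ.C_Proj2)
    by ((assumption | blast | simp add: ren_val)+)?
next
  case (Cut_Pos e A S G T D t)
  show ?case
    apply (insert Cut_Pos)
    apply (intro allI impI, simp only: ren_tm.simps ren_co.simps ren_cmd.simps)
    apply (rule tm_typ_co_typ_cmd_typ.Cut_Pos[where A=A])
    by ((assumption | blast | simp add: ren_val)+)?
next
  case (Cut_Neg A V G T D k)
  show ?case
    apply (insert Cut_Neg)
    apply (intro allI impI, simp only: ren_tm.simps ren_co.simps ren_cmd.simps)
    apply (rule tm_typ_co_typ_cmd_typ.Cut_Neg[where A=A])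
    by ((assumption | blast | simp add: ren_val)+)?
next
  case (T_Mu A e G T D c)
  show ?case
    apply (insert T_Mu)
    apply (intro allI impI, simp only: ren_tm.simps ren_co.simps ren_cmd.simps)
    apply (rule tm_typ_co_typ_cmd_typ.T_Mu)
    by ((assumption | blast intro: rok_D | simp add: ren_val)+)?
next
  case (T_Box V T A G D)
  show ?case
    apply (insert T_Box)
    apply (intro allI impI, simp only: ren_tm.simps ren_co.simps ren_cmd.simps)
    apply (rule tm_typ_co_typ_cmd_typ.T_Box)
    by ((assumption | blast intro: rok_box | simp add: ren_val)+)?
next
  case (T_MuBrk A G T D c)
  show ?case
    apply (insert T_MuBrk)
    apply (intro allI impI, simp only: ren_tm.simps ren_co.simps ren_cmd.simps)
    apply (rule tm_typ_co_typ_cmd_typ.T_MuBrk)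
    by ((assumption | blast intro: rok_G | simp add: ren_val)+)?
next
  case (T_MuPar G T A B D c)
  show ?case
    apply (insert T_MuPar)
    apply (intro allI impI, simp only: ren_tm.simps ren_co.simps ren_cmd.simps)
    apply (rule tm_typ_co_typ_cmd_typ.T_MuPar)
    by ((assumption | blast intro: rok_DD | simp add: ren_val)+)?
next
  case (T_MuWith G T A D c1 B c2)
  show ?case
    apply (insert T_MuWith)
    apply (intro allI impI, simp only: ren_tm.simps ren_co.simps ren_cmd.simps)
    apply (rule tm_typ_co_typ_cmd_typ.T_MuWith)
    by ((assumption | blast intro: rok_D | simp add: ren_val)+)?
next
  case (C_MuT A e G T D c)
  show ?case
    apply (insert C_MuT)
    apply (intro allI impI, simp only: ren_tm.simps ren_co.simps ren_cmd.simps)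
    apply (rule tm_typ_co_typ_cmd_typ.C_MuT)
    by ((assumption | blast intro: rok_G | simp add: ren_val)+)?
next
  case (C_MuTPair A B G T D c)
  show ?case
    apply (insert C_MuTPair)
    apply (intro allI impI, simp only: ren_tm.simps ren_co.simps ren_cmd.simps)
    apply (rule tm_typ_co_typ_cmd_typ.C_MuTPair)
    by ((assumption | blast intro: rok_GG | simp add: ren_val)+)?
next
  case (C_MuTCase A G T D c1 B c2)
  show ?case
    apply (insert C_MuTCase)
    apply (intro allI impI, simp only: ren_tm.simps ren_co.simps ren_cmd.simps)
    apply (rule tm_typ_co_typ_cmd_typ.C_MuTCase)
    by ((assumption | blast intro: rok_G | simp add: ren_val)+)?
next
  case (C_MuTBox G A T D c)
  show ?case
    apply (insert C_MuTBox)
    apply (intro allI impI, simp only: ren_tm.simps ren_co.simps ren_cmd.simps)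
    apply (rule tm_typ_co_typ_cmd_typ.C_MuTBox)
    by ((assumption | blast intro: rok_T | simp add: ren_val)+)?
qed

lemmas ren_typ' = ren_typ[rule_format]

lemma rok_shiftG: "rok G T D Suc id id (A#G) T D" by (simp add: rok_def)
lemma rok_shiftT: "rok G T D id Suc id G (A#T) D" by (simp add: rok_def)
lemma rok_shiftD: "rok G T D id id Suc G T (A#D)" by (simp add: rok_def)

definition sok :: "ty list \<Rightarrow> ty list \<Rightarrow> ty list \<Rightarrow> (nat \<Rightarrow> tm) \<Rightarrow> (nat \<Rightarrow> tm) \<Rightarrow> (nat \<Rightarrow> cotm)
   \<Rightarrow> ty list \<Rightarrow> ty list \<Rightarrow> ty list \<Rightarrow> bool" where
  "sok G T D s th d G' T' D' \<longleftrightarrow>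
    (\<forall>i<length G. tm_typ G' T' D' (s i) (G!i)) \<and>
    (\<forall>i<length T. tm_typ [] T' [] (th i) (T!i)) \<and>
    (\<forall>i<length D. co_typ G' T' D' (d i) (D!i)) \<and>
    (\<forall>i. is_value (s i)) \<and> (\<forall>i. is_value (th i)) \<and> (\<forall>i. is_stack (d i))"

lemma sok_G: assumes "sok G T D s th d G' T' D'"
  shows "sok (A#G) T D (upG_s s) (upG_t th) (upG_d d) (A#G') T' D'"
  unfolding sok_def
proof (intro conjI allI impI)
  fix i assume "i < length (A#G)"
  then show "tm_typ (A # G') T' D' (upG_s s i) ((A # G) ! i)"
    using assms unfolding sok_def upG_s_def scons_def
    by (cases i) (auto intro: ren_typ'(1)[OF _ rok_shiftG] tm_typ_co_typ_cmd_typ.T_Var[of 0 "A#G'", simplified])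
next
  fix i assume "i < length T"
  then show "tm_typ [] T' [] (upG_t th i) (T ! i)"
    using assms unfolding sok_def upG_t_def
    by (auto intro: ren_typ'(1) simp: rok_def)
next
  fix i assume "i < length D"
  then show "co_typ (A # G') T' D' (upG_d d i) (D ! i)"
    using assms unfolding sok_def upG_d_def
    by (auto intro: ren_typ'(2)[OF _ rok_shiftG])
qed (use assms in \<open>auto simp: sok_def upG_s_def upG_t_def upG_d_def scons_def ren_val split: nat.splits\<close>)

lemma sok_T: assumes "sok G T D s th d G' T' D'"
  shows "sok G (A#T) D (upM_s s) (upM_t th) (upM_d d) G' (A#T') D'"
  unfolding sok_def
proof (intro conjI allI impI)
  fix i assume "i < length G"
  then show "tm_typ G' (A#T') D' (upM_s s i) (G ! i)"
    using assms unfolding sok_def upM_s_def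
    by (auto intro: ren_typ'(1)[OF _ rok_shiftT])
next
  fix i assume "i < length (A#T)"
  then show "tm_typ [] (A#T') [] (upM_t th i) ((A#T) ! i)"
    using assms unfolding sok_def upM_t_def scons_def
    by (cases i) (auto intro: ren_typ'(1)[OF _ rok_shiftT] tm_typ_co_typ_cmd_typ.T_MVar[of 0 "A#T'", simplified])
next
  fix i assume "i < length D"
  then show "co_typ G' (A#T') D' (upM_d d i) (D ! i)"
    using assms unfolding sok_def upM_d_def
    by (auto intro: ren_typ'(2)[OF _ rok_shiftT])
qed (use assms in \<open>auto simp: sok_def upM_s_def upM_t_def upM_d_def scons_def ren_val split: nat.splits\<close>)

lemma sok_D: assumes "sok G T D s th d G' T' D'"
  shows "sok G T (A#D) (upD_s s) (upD_t th) (upD_d d) G' T' (A#D')"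
  unfolding sok_def
proof (intro conjI allI impI)
  fix i assume "i < length G"
  then show "tm_typ G' T' (A#D') (upD_s s i) (G ! i)"
    using assms unfolding sok_def upD_s_def
    by (auto intro: ren_typ'(1)[OF _ rok_shiftD])
next
  fix i assume "i < length T"
  then show "tm_typ [] T' [] (upD_t th i) (T ! i)"
    using assms unfolding sok_def upD_t_def
    by (auto intro: ren_typ'(1) simp: rok_def)
next
  fix i assume "i < length (A#D)"
  then show "co_typ G' T' (A#D') (upD_d d i) ((A#D) ! i)"
    using assms unfolding sok_def upD_d_def scons_def
    by (cases i) (auto intro: ren_typ'(2)[OF _ rok_shiftD] tm_typ_co_typ_cmd_typ.C_CoVar[of 0 "A#D'", simplified])
qed (use assms in \<open>auto simp: sok_def upD_s_def upD_t_def upD_d_def scons_def ren_val split: nat.splits\<close>)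

lemma sok_GG: "sok G T D s th d G' T' D' \<Longrightarrow>
   sok (A#B#G) T D (upG_s (upG_s s)) (upG_t (upG_t th)) (upG_d (upG_d d)) (A#B#G') T' D'"
  by (intro sok_G)
lemma sok_DD: "sok G T D s th d G' T' D' \<Longrightarrow>
   sok G T (A#B#D) (upD_s (upD_s s)) (upD_t (upD_t th)) (upD_d (upD_d d)) G' T' (A#B#D')"
  by (intro sok_D)
lemma sok_box: "sok G T D s th d G' T' D' \<Longrightarrow> sok [] T [] s th d [] T' []"
  by (simp add: sok_def)

lemma sok_vals: "sok G T D s th d G' T' D' \<Longrightarrow>
   (\<forall>i. is_value (s i)) \<and> (\<forall>i. is_value (th i)) \<and> (\<forall>i. is_stack (d i))"
  by (simp add: sok_def)

lemma lift_id: "lift id = id" "lift (\<lambda>a. a) = (\<lambda>a. a)"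
  by (auto simp: lift_def split: nat.splits)

lemma ren_id:
  "ren_tm id id id t = t" "ren_co id id id k = k" "ren_cmd id id id c = c"
  by (induction t and k and c) (simp_all add: lift_id)

lemma weaken_box: "tm_typ [] T [] t A \<Longrightarrow> tm_typ G T D t A"
proof -
  assume a: "tm_typ [] T [] t A"
  have "rok [] T [] id id id G T D" by (simp add: rok_def)
  from ren_typ'(1)[OF a this] show ?thesis by (simp add: ren_id)
qed

lemma sub_val':
  "sok G T D s th d G' T' D' \<Longrightarrow> is_value t \<Longrightarrow> is_value (sub_tm s th d t)"
  "sok G T D s th d G' T' D' \<Longrightarrow> is_stack k \<Longrightarrow> is_stack (sub_co s th d k)"
  using sub_val(1)[of s th d t] sub_val(2)[of s th d k] by (simp_all add: sok_def)

lemma sub_typ: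
  "tm_typ G T D t A \<Longrightarrow> (\<forall>G' T' D' s th d. sok G T D s th d G' T' D' \<longrightarrow> tm_typ G' T' D' (sub_tm s th d t) A)"
  "co_typ G T D k A \<Longrightarrow> (\<forall>G' T' D' s th d. sok G T D s th d G' T' D' \<longrightarrow> co_typ G' T' D' (sub_co s th d k) A)"
  "cmd_typ G T D c \<Longrightarrow> (\<forall>G' T' D' s th d. sok G T D s th d G' T' D' \<longrightarrow> cmd_typ G' T' D' (sub_cmd s th d c))"
proof (induction rule: tm_typ_co_typ_cmd_typ.inducts)
  case (T_MVar i T G D)
  then show ?case
    by (auto simp: sok_def intro: weaken_box)
next
  case (T_Var i G T D)
  then show ?case by (auto simp: sok_def)
next
  case (C_CoVar i D G T)
  then show ?case by (auto simp: sok_def)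
next
  case (T_Unit G T D)
  show ?case
    apply (insert T_Unit)
    apply (intro allI impI, simp only: sub_tm.simps sub_co.simps sub_cmd.simps)
    apply (rule tm_typ_co_typ_cmd_typ.T_Unit)
    by ((assumption | blast | blast intro: sub_val')+)?
next
  case (T_Pair V W G T D A B)
  show ?case
    apply (insert T_Pair)
    apply (intro allI impI, simp only: sub_tm.simps sub_co.simps sub_cmd.simps)
    apply (rule tm_typ_co_typ_cmd_typ.T_Pair)
    by ((assumption | blast | blast intro: sub_val')+)?
next
  case (T_Inj1 V G T D A B)
  show ?case
    apply (insert T_Inj1)
    apply (intro allI impI, simp only: sub_tm.simps sub_co.simps sub_cmd.simps)
    apply (rule tm_typ_co_typ_cmd_typ.T_Inj1)
    by ((assumption | blast | blast intro: sub_val')+)?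
next
  case (T_Inj2 V G T D B A)
  show ?case
    apply (insert T_Inj2)
    apply (intro allI impI, simp only: sub_tm.simps sub_co.simps sub_cmd.simps)
    apply (rule tm_typ_co_typ_cmd_typ.T_Inj2)
    by ((assumption | blast | blast intro: sub_val')+)?
next
  case (C_MuTUnit G T D c)
  show ?case
    apply (insert C_MuTUnit)
    apply (intro allI impI, simp only: sub_tm.simps sub_co.simps sub_cmd.simps)
    apply (rule tm_typ_co_typ_cmd_typ.C_MuTUnit)
    by ((assumption | blast | blast intro: sub_val')+)?
next
  case (C_Brk V G T D A)
  show ?case
    apply (insert C_Brk)
    apply (intro allI impI, simp only: sub_tm.simps sub_co.simps sub_cmd.simps)
    apply (rule tm_typ_co_typ_cmd_typ.C_Brk)
    by ((assumption | blast | blast intro: sub_val')+)?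
next
  case (C_CoPair S S' G T D A B)
  show ?case
    apply (insert C_CoPair)
    apply (intro allI impI, simp only: sub_tm.simps sub_co.simps sub_cmd.simps)
    apply (rule tm_typ_co_typ_cmd_typ.C_CoPair)
    by ((assumption | blast | blast intro: sub_val')+)?
next
  case (C_Proj1 S G T D A B)
  show ?case
    apply (insert C_Proj1)
    apply (intro allI impI, simp only: sub_tm.simps sub_co.simps sub_cmd.simps)
    apply (rule tm_typ_co_typ_cmd_typ.C_Proj1)
    by ((assumption | blast | blast intro: sub_val')+)?
next
  case (C_Proj2 S G T D B A)
  show ?case
    apply (insert C_Proj2)
    apply (intro allI impI, simp only: sub_tm.simps sub_co.simps sub_cmd.simps)
    apply (rule tm_typ_co_typ_cmd_typ.C_Proj2)
    by ((assumption | blast | blast intro: sub_val')+)?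
next
  case (Cut_Pos e A S G T D t)
  show ?case
    apply (insert Cut_Pos)
    apply (intro allI impI, simp only: sub_tm.simps sub_co.simps sub_cmd.simps)
    apply (rule tm_typ_co_typ_cmd_typ.Cut_Pos[where A=A])
    by ((assumption | blast | blast intro: sub_val')+)?
next
  case (Cut_Neg A V G T D k)
  show ?case
    apply (insert Cut_Neg)
    apply (intro allI impI, simp only: sub_tm.simps sub_co.simps sub_cmd.simps)
    apply (rule tm_typ_co_typ_cmd_typ.Cut_Neg[where A=A])
    by ((assumption | blast | blast intro: sub_val')+)?
next
  case (T_Mu A e G T D c)
  show ?case
    apply (insert T_Mu)
    apply (intro allI impI, simp only: sub_tm.simps sub_co.simps sub_cmd.simps)
    apply (rule tm_typ_co_typ_cmd_typ.T_Mu)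
    by ((assumption | blast intro: sok_D | blast intro: sub_val')+)?
next
  case (T_Box V T A G D)
  show ?case
    apply (insert T_Box)
    apply (intro allI impI, simp only: sub_tm.simps sub_co.simps sub_cmd.simps)
    apply (rule tm_typ_co_typ_cmd_typ.T_Box)
    by ((assumption | blast intro: sok_box | blast intro: sub_val')+)?
next
  case (T_MuBrk A G T D c)
  show ?case
    apply (insert T_MuBrk)
    apply (intro allI impI, simp only: sub_tm.simps sub_co.simps sub_cmd.simps)
    apply (rule tm_typ_co_typ_cmd_typ.T_MuBrk)
    by ((assumption | blast intro: sok_G | blast intro: sub_val')+)?
next
  case (T_MuPar G T A B D c)
  show ?case
    apply (insert T_MuPar)
    apply (intro allI impI, simp only: sub_tm.simps sub_co.simps sub_cmd.simps)
    apply (rule tm_typ_co_typ_cmd_typ.T_MuPar)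
    by ((assumption | blast intro: sok_DD | blast intro: sub_val')+)?
next
  case (T_MuWith G T A D c1 B c2)
  show ?case
    apply (insert T_MuWith)
    apply (intro allI impI, simp only: sub_tm.simps sub_co.simps sub_cmd.simps)
    apply (rule tm_typ_co_typ_cmd_typ.T_MuWith)
    by ((assumption | blast intro: sok_D | blast intro: sub_val')+)?
next
  case (C_MuT A e G T D c)
  show ?case
    apply (insert C_MuT)
    apply (intro allI impI, simp only: sub_tm.simps sub_co.simps sub_cmd.simps)
    apply (rule tm_typ_co_typ_cmd_typ.C_MuT)
    by ((assumption | blast intro: sok_G | blast intro: sub_val')+)?
next
  case (C_MuTPair A B G T D c)
  show ?case
    apply (insert C_MuTPair)
    apply (intro allI impI, simp only: sub_tm.simps sub_co.simps sub_cmd.simps)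
    apply (rule tm_typ_co_typ_cmd_typ.C_MuTPair)
    by ((assumption | blast intro: sok_GG | blast intro: sub_val')+)?
next
  case (C_MuTCase A G T D c1 B c2)
  show ?case
    apply (insert C_MuTCase)
    apply (intro allI impI, simp only: sub_tm.simps sub_co.simps sub_cmd.simps)
    apply (rule tm_typ_co_typ_cmd_typ.C_MuTCase)
    by ((assumption | blast intro: sok_G | blast intro: sub_val')+)?
next
  case (C_MuTBox G A T D c)
  show ?case
    apply (insert C_MuTBox)
    apply (intro allI impI, simp only: sub_tm.simps sub_co.simps sub_cmd.simps)
    apply (rule tm_typ_co_typ_cmd_typ.C_MuTBox)
    by ((assumption | blast intro: sok_T | blast intro: sub_val')+)?
qed

lemma sok_id: "sok G T D Var MVar CoVar G T D"
  by (auto simp: sok_def intro: tm_typ_co_typ_cmd_typ.intros weaken_box)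

lemma scons_nth: "(x # xs) ! i = scons x (\<lambda>j. xs ! j) i"
  by (cases i) (auto simp: scons_def)

lemma sokD1: "is_stack S \<Longrightarrow> co_typ G T D S A \<Longrightarrow> sok G T (A#D) Var MVar (scons S CoVar) G T D"
  by (auto simp: sok_def scons_def intro: tm_typ_co_typ_cmd_typ.intros weaken_box split: nat.splits)

lemma sokD2: "is_stack S \<Longrightarrow> is_stack S' \<Longrightarrow> co_typ G T D S A \<Longrightarrow> co_typ G T D S' B \<Longrightarrow>
   sok G T (A#B#D) Var MVar (scons S (scons S' CoVar)) G T D"
  by (auto simp: sok_def scons_def intro: tm_typ_co_typ_cmd_typ.intros weaken_box split: nat.splits)

lemma sokG1: "is_value V \<Longrightarrow> tm_typ G T D V A \<Longrightarrow> sok (A#G) T D (scons V Var) MVar CoVar G T D"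
  by (auto simp: sok_def scons_def intro: tm_typ_co_typ_cmd_typ.intros weaken_box split: nat.splits)

lemma sokG2: "is_value V \<Longrightarrow> is_value W \<Longrightarrow> tm_typ G T D V A \<Longrightarrow> tm_typ G T D W B \<Longrightarrow>
   sok (A#B#G) T D (scons V (scons W Var)) MVar CoVar G T D"
  by (auto simp: sok_def scons_def intro: tm_typ_co_typ_cmd_typ.intros weaken_box split: nat.splits)

lemma sokM1: "is_value V \<Longrightarrow> tm_typ [] T [] V A \<Longrightarrow> sok G (A#T) D Var (scons V MVar) CoVar G T D"
  by (auto simp: sok_def scons_def intro: tm_typ_co_typ_cmd_typ.intros weaken_box split: nat.splits)

lemmas sub_cmd_typ = sub_typ(3)[rule_format]

inductive_cases inv_Mu: "tm_typ G T D (Mu e c) A"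
inductive_cases inv_MuT: "co_typ G T D (MuT e c) A"
inductive_cases inv_MuTUnit: "co_typ G T D (MuTUnit c) A"
inductive_cases inv_Pair: "tm_typ G T D (Pair V W) A"
inductive_cases inv_MuTPair: "co_typ G T D (MuTPair c) A"
inductive_cases inv_Inj1: "tm_typ G T D (Inj1 V) A"
inductive_cases inv_Inj2: "tm_typ G T D (Inj2 V) A"
inductive_cases inv_MuTCase: "co_typ G T D (MuTCase c1 c2) A"
inductive_cases inv_BoxV: "tm_typ G T D (BoxV V) A"
inductive_cases inv_MuTBox: "co_typ G T D (MuTBox c) A"
inductive_cases inv_MuBrk: "tm_typ G T D (MuBrk c) A"
inductive_cases inv_Brk: "co_typ G T D (Brk V) A"
inductive_cases inv_MuPar: "tm_typ G T D (MuPar c) A"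
inductive_cases inv_CoPair: "co_typ G T D (CoPair S S') A"
inductive_cases inv_MuWith: "tm_typ G T D (MuWith c1 c2) A"
inductive_cases inv_Proj1: "co_typ G T D (Proj1 S) A"
inductive_cases inv_Proj2: "co_typ G T D (Proj2 S) A"
inductive_cases inv_Cut: "cmd_typ G T D (Cut e t k)"

theorem mainTheorem3:
  assumes "red c c'"
    and "cmd_typ G T D c"
  shows "cmd_typ G T D c'"
  using assms
proof (induction rule: red.induct)
  case (R_Mu S e c)
  from R_Mu show ?case
    by (auto elim!: inv_Cut inv_Mu simp: substD_def intro: sub_cmd_typ sokD1)
next
  case (R_MuT V e c)
  from R_MuT show ?case
    by (auto elim!: inv_Cut inv_MuT inv_MuTUnit simp: substG_def intro: sub_cmd_typ sokG1)
next
  case (R_Unit c)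
  from R_Unit show ?case
    by (auto elim!: inv_Cut inv_MuTUnit)
next
  case (R_Pair V W e c)
  from R_Pair show ?case
    by (auto elim!: inv_Cut inv_MuT inv_MuTPair inv_Pair inv_Inj1 inv_Inj2 inv_MuTCase inv_BoxV inv_MuTBox inv_MuBrk inv_Brk inv_MuPar inv_CoPair inv_MuWith inv_Proj1 inv_Proj2 simp: substG2_def intro: sub_cmd_typ sokG2)
next
  case (R_Inj1 V e c1 c2)
  from R_Inj1 show ?case
    by (auto elim!: inv_Cut inv_MuT inv_MuTPair inv_Pair inv_Inj1 inv_Inj2 inv_MuTCase inv_BoxV inv_MuTBox inv_MuBrk inv_Brk inv_MuPar inv_CoPair inv_MuWith inv_Proj1 inv_Proj2 simp: substG_def intro: sub_cmd_typ sokG1)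
next
  case (R_Inj2 V e c1 c2)
  from R_Inj2 show ?case
    by (auto elim!: inv_Cut inv_MuT inv_MuTPair inv_Pair inv_Inj1 inv_Inj2 inv_MuTCase inv_BoxV inv_MuTBox inv_MuBrk inv_Brk inv_MuPar inv_CoPair inv_MuWith inv_Proj1 inv_Proj2 simp: substG_def intro: sub_cmd_typ sokG1)
next
  case (R_Box V c)
  from R_Box show ?case
    by (auto elim!: inv_Cut inv_MuT inv_MuTPair inv_Pair inv_Inj1 inv_Inj2 inv_MuTCase inv_BoxV inv_MuTBox inv_MuBrk inv_Brk inv_MuPar inv_CoPair inv_MuWith inv_Proj1 inv_Proj2 simp: substM_def intro: sub_cmd_typ sokM1)
next
  case (R_Brk V c)
  from R_Brk show ?case
    by (auto elim!: inv_Cut inv_MuT inv_MuTPair inv_Pair inv_Inj1 inv_Inj2 inv_MuTCase inv_BoxV inv_MuTBox inv_MuBrk inv_Brk inv_MuPar inv_CoPair inv_MuWith inv_Proj1 inv_Proj2 simp: substG_def intro: sub_cmd_typ sokG1)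
next
  case (R_Par S S' c)
  from R_Par show ?case
    by (auto elim!: inv_Cut inv_MuT inv_MuTPair inv_Pair inv_Inj1 inv_Inj2 inv_MuTCase inv_BoxV inv_MuTBox inv_MuBrk inv_Brk inv_MuPar inv_CoPair inv_MuWith inv_Proj1 inv_Proj2 simp: substD2_def intro: sub_cmd_typ sokD2)
next
  case (R_Proj1 S c1 c2)
  from R_Proj1 show ?case
    by (auto elim!: inv_Cut inv_MuT inv_MuTPair inv_Pair inv_Inj1 inv_Inj2 inv_MuTCase inv_BoxV inv_MuTBox inv_MuBrk inv_Brk inv_MuPar inv_CoPair inv_MuWith inv_Proj1 inv_Proj2 simp: substD_def intro: sub_cmd_typ sokD1)
next
  case (R_Proj2 S c1 c2)
  from R_Proj2 show ?case
    by (auto elim!: inv_Cut inv_MuT inv_MuTPair inv_Pair inv_Inj1 inv_Inj2 inv_MuTCase inv_BoxV inv_MuTBox inv_MuBrk inv_Brk inv_MuPar inv_CoPair inv_MuWith inv_Proj1 inv_Proj2 simp: substD_def intro: sub_cmd_typ sokD1)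
qed

end
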